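(* Let $G$ be a graph, let $D$ be a minimum dominating set of $G$ and $\gamma=|D|$, and let $\nabla$ be an integer with $\nabla>\nabla_1^B(G)$. Let $$\hat D=\{v\in V(G): \text{for all } A\subseteq D\setminus\{v\} \text{ with } N(v)\subseteq N[A] \text{ we have } |A|>2\nabla-1\}.$$ Then $|\hat D\setminus D|<\rho(G)\cdot\gamma$.
   Context: Graphs are finite, undirected and simple. $N(v)$ is the open neighbourhood of $v$, $N[v]=N(v)\cup\{v\}$, and $N[A]=\bigcup_{a\in A}N[a]$. A dominating set is a set $D$ with $N[D]=V(G)$. A graph $H$ is a $1$-shallow minor of $G$ if it is obtained from $G$ by deleting vertices and edges and contracting pairwise vertex-disjoint connected subgraphs of radius at most $1$. $\nabla_1^B(G)$ is the maximum of $|E(H)|/|V(H)|$ over all bipartite $1$-shallow minors $H$ of $G$. The Hall ratio $\rho(G)$ is $\max\{|V(H)|/\alpha(H): H\subseteq G\}$, where $\alpha(H)$ is the size of a largest independent set of $H$. *)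

theory Defs
  imports Complex_Main
begin

definition graph :: "'a set \<Rightarrow> ('a \<Rightarrow> 'a \<Rightarrow> bool) \<Rightarrow> bool" where
  "graph V E \<longleftrightarrow> finite V \<and> (\<forall>x y. E x y \<longrightarrow> x \<in> V \<and> y \<in> V \<and> x \<noteq> y \<and> E y x)"

definition nbhd :: "'a set \<Rightarrow> ('a \<Rightarrow> 'a \<Rightarrow> bool) \<Rightarrow> 'a \<Rightarrow> 'a set" where
  "nbhd V E v = {u \<in> V. E v u}"

definition cnbhd_set :: "'a set \<Rightarrow> ('a \<Rightarrow> 'a \<Rightarrow> bool) \<Rightarrow> 'a set \<Rightarrow> 'a set" where
  "cnbhd_set V E A = A \<union> (\<Union>a\<in>A. nbhd V E a)"

definition dominating :: "'a set \<Rightarrow> ('a \<Rightarrow> 'a \<Rightarrow> bool) \<Rightarrow> 'a set \<Rightarrow> bool" where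
  "dominating V E D \<longleftrightarrow> D \<subseteq> V \<and> cnbhd_set V E D = V"

definition min_dominating :: "'a set \<Rightarrow> ('a \<Rightarrow> 'a \<Rightarrow> bool) \<Rightarrow> 'a set \<Rightarrow> bool" where
  "min_dominating V E D \<longleftrightarrow> dominating V E D \<and> (\<forall>D'. dominating V E D' \<longrightarrow> card D \<le> card D')"

definition num_edges :: "'b set \<Rightarrow> ('b \<Rightarrow> 'b \<Rightarrow> bool) \<Rightarrow> nat" where
  "num_edges V E = card {{x, y} | x y. x \<in> V \<and> y \<in> V \<and> E x y}"

definition bipartite :: "'b set \<Rightarrow> ('b \<Rightarrow> 'b \<Rightarrow> bool) \<Rightarrow> bool" where
  "bipartite V E \<longleftrightarrow> (\<exists>A \<subseteq> V. \<forall>x\<in>V. \<forall>y\<in>V. E x y \<longrightarrow> (x \<in> A \<longleftrightarrow> y \<notin> A))"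

text \<open>1-shallow minors, represented with the branch sets as vertices: each branch set is a
  vertex set of G spanning a connected subgraph of radius at most 1 (i.e. it has a centre adjacent
  to all its other vertices), branch sets are pairwise disjoint, and an edge of H between two
  branch sets requires an edge of G between them (edges may be deleted). Vertices of G not in
  any branch set are deleted.\<close>
definition shallow1_minor :: "'a set \<Rightarrow> ('a \<Rightarrow> 'a \<Rightarrow> bool) \<Rightarrow> 'a set set \<Rightarrow> ('a set \<Rightarrow> 'a set \<Rightarrow> bool) \<Rightarrow> bool" where
  "shallow1_minor V E VH EH \<longleftrightarrow>
     graph VH EH \<and>
     (\<forall>B\<in>VH. B \<subseteq> V \<and> (\<exists>c\<in>B. \<forall>v\<in>B. v = c \<or> E c v)) \<and>
     (\<forall>B1\<in>VH. \<forall>B2\<in>VH. B1 \<noteq> B2 \<longrightarrow> B1 \<inter> B2 = {}) \<and>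
     (\<forall>B1 B2. EH B1 B2 \<longrightarrow> (\<exists>u\<in>B1. \<exists>v\<in>B2. E u v))"

text \<open>nabla_1^B(G): maximum edge density over bipartite 1-shallow minors (0/0 = 0 for the empty minor).\<close>
definition nabla1B :: "'a set \<Rightarrow> ('a \<Rightarrow> 'a \<Rightarrow> bool) \<Rightarrow> real" where
  "nabla1B V E = Max {real (num_edges VH EH) / real (card VH) | VH EH.
                        shallow1_minor V E VH EH \<and> bipartite VH EH}"

definition independent :: "'a set \<Rightarrow> ('a \<Rightarrow> 'a \<Rightarrow> bool) \<Rightarrow> 'a set \<Rightarrow> bool" where
  "independent V E I \<longleftrightarrow> I \<subseteq> V \<and> (\<forall>x\<in>I. \<forall>y\<in>I. \<not> E x y)"

definition alpha :: "'a set \<Rightarrow> ('a \<Rightarrow> 'a \<Rightarrow> bool) \<Rightarrow> nat" where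
  "alpha V E = Max {card I | I. independent V E I}"

definition subgraph :: "'a set \<Rightarrow> ('a \<Rightarrow> 'a \<Rightarrow> bool) \<Rightarrow> 'a set \<Rightarrow> ('a \<Rightarrow> 'a \<Rightarrow> bool) \<Rightarrow> bool" where
  "subgraph V E W F \<longleftrightarrow> graph W F \<and> W \<subseteq> V \<and> (\<forall>x y. F x y \<longrightarrow> E x y)"

text \<open>Hall ratio rho(G) (the empty subgraph contributes 0/0 = 0).\<close>
definition hall_ratio :: "'a set \<Rightarrow> ('a \<Rightarrow> 'a \<Rightarrow> bool) \<Rightarrow> real" where
  "hall_ratio V E = Max {real (card W) / real (alpha W F) | W F. subgraph V E W F}"

definition Dhat :: "'a set \<Rightarrow> ('a \<Rightarrow> 'a \<Rightarrow> bool) \<Rightarrow> 'a set \<Rightarrow> int \<Rightarrow> 'a set" where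
  "Dhat V E D nabla = {v \<in> V. \<forall>A. A \<subseteq> D - {v} \<and> nbhd V E v \<subseteq> cnbhd_set V E A
                                   \<longrightarrow> int (card A) > 2 * nabla - 1}"

end

theory Submission
  imports Defs
begin

lemma alpha_props:
  assumes "finite W"
  shows "alpha W F \<le> card W" and "\<exists>I. independent W F I \<and> card I = alpha W F"
proof -
  let ?S = "{card I | I. independent W F I}"
  have sub: "?S \<subseteq> {..card W}"
    using assms by (auto simp: independent_def intro: card_mono)
  have fin: "finite ?S" using sub finite_subset by blast
  have ne: "?S \<noteq> {}" by (auto simp: independent_def)
  show "alpha W F \<le> card W" unfolding alpha_def using sub fin ne
    by (meson Max_in atMost_iff subsetD)
  show "\<exists>I. independent W F I \<and> card I = alpha W F"
    unfolding alpha_def using Max_in[OF fin ne] by auto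
qed

lemma alpha_pos:
  assumes "graph W F" "W \<noteq> {}"
  shows "alpha W F \<ge> 1"
proof -
  let ?S = "{card I | I. independent W F I}"
  have fW: "finite W" using assms by (simp add: graph_def)
  have sub: "?S \<subseteq> {..card W}"
    using fW by (auto simp: independent_def intro: card_mono)
  have fin: "finite ?S" using sub finite_subset by blast
  obtain w where w: "w \<in> W" using assms by auto
  have "independent W F {w}" using w assms(1) by (auto simp: independent_def graph_def)
  hence "1 \<in> ?S" by force
  thus ?thesis unfolding alpha_def using fin by (meson Max_ge order_trans)
qed

lemma hall_ge:
  assumes "graph V E" "subgraph V E W F"
  shows "real (card W) / real (alpha W F) \<le> hall_ratio V E"
proof -
  have fV: "finite V" using assms by (simp add: graph_def)
  let ?S = "{real (card W) / real (alpha W F) | W F. subgraph V E W F}"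
  have "?S \<subseteq> (\<lambda>(n,m). real n / real m) ` ({..card V} \<times> {..card V})"
  proof
    fix x assume "x \<in> ?S"
    then obtain W' F' where x: "x = real (card W') / real (alpha W' F')" and s: "subgraph V E W' F'" by blast
    have "W' \<subseteq> V" using s by (simp add: subgraph_def)
    hence c: "card W' \<le> card V" using fV card_mono by blast
    have "finite W'" using \<open>W' \<subseteq> V\<close> fV finite_subset by blast
    hence "alpha W' F' \<le> card V" using alpha_props(1)[of W' F'] c by linarith
    thus "x \<in> (\<lambda>(n,m). real n / real m) ` ({..card V} \<times> {..card V})"
      using x c by force
  qed
  hence fin: "finite ?S" by (rule finite_subset) auto
  have "real (card W) / real (alpha W F) \<in> ?S" using assms(2) by blast
  with fin show ?thesis unfolding hall_ratio_def by (rule Max_ge)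
qed

lemma nabla_ge:
  assumes "graph V E" "shallow1_minor V E VH EH" "bipartite VH EH"
  shows "real (num_edges VH EH) / real (card VH) \<le> nabla1B V E"
proof -
  have fV: "finite V" using assms by (simp add: graph_def)
  let ?N = "card (Pow (Pow V))" and ?M = "card (Pow V)"
  let ?S = "{real (num_edges VH EH) / real (card VH) | VH EH.
                        shallow1_minor V E VH EH \<and> bipartite VH EH}"
  have "?S \<subseteq> (\<lambda>(n,m). real n / real m) ` ({..?N} \<times> {..?M})"
  proof
    fix x assume "x \<in> ?S"
    then obtain W F where x: "x = real (num_edges W F) / real (card W)" and s: "shallow1_minor V E W F" by blast
    have WP: "W \<subseteq> Pow V" using s by (auto simp: shallow1_minor_def)
    hence c: "card W \<le> ?M" using fV card_mono by (metis finite_Pow_iff)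
    have "{{x, y} | x y. x \<in> W \<and> y \<in> W \<and> F x y} \<subseteq> Pow (Pow V)" using WP by auto
    hence "num_edges W F \<le> ?N" unfolding num_edges_def
      by (rule card_mono[rotated]) (simp add: fV)
    thus "x \<in> (\<lambda>(n,m). real n / real m) ` ({..?N} \<times> {..?M})"
      using x c by force
  qed
  hence fin: "finite ?S" by (rule finite_subset) auto
  have "real (num_edges VH EH) / real (card VH) \<in> ?S" using assms(2,3) by blast
  with fin show ?thesis unfolding nabla1B_def by (rule Max_ge)
qed


lemma minor_bound:
  assumes g: "graph V E" and dom: "dominating V E D"
    and ID: "I \<subseteq> Dhat V E D nabla" "I \<inter> D = {}" and indep: "\<forall>x\<in>I. \<forall>y\<in>I. \<not> E x y"
    and cardI: "card I = card D" and pos: "card D \<ge> 1"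
  shows "real_of_int nabla \<le> nabla1B V E"
proof -
  have fV: "finite V" using g by (simp add: graph_def)
  have DV: "D \<subseteq> V" using dom by (simp add: dominating_def)
  have IV: "I \<subseteq> V" using ID(1) by (auto simp: Dhat_def)
  have fD: "finite D" using DV fV finite_subset by blast
  have fI: "finite I" using IV fV finite_subset by blast
  have Esym: "\<And>x y. E x y \<Longrightarrow> E y x" and EV: "\<And>x y. E x y \<Longrightarrow> x \<in> V \<and> y \<in> V \<and> x \<noteq> y"
    using g by (auto simp: graph_def)
  define R where "R = V - D - I"
  have domu: "\<exists>d. d \<in> D \<and> E d u" if "u \<in> R" for u
  proof -
    have "u \<in> cnbhd_set V E D" using dom that by (auto simp: dominating_def R_def)
    thus ?thesis using that by (auto simp: cnbhd_set_def nbhd_def R_def)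
  qed
  define f where "f u = (SOME d. d \<in> D \<and> E d u)" for u
  have f: "f u \<in> D \<and> E (f u) u" if "u \<in> R" for u
    unfolding f_def using someI_ex[OF domu[OF that]] .
  define B where "B d = insert d {u \<in> R. f u = d}" for d
  define VH where "VH = (\<lambda>v. {v}) ` I \<union> B ` D"
  define EH where "EH X Y = (\<exists>v\<in>I. \<exists>d\<in>D. ((X = {v} \<and> Y = B d) \<or> (X = B d \<and> Y = {v})) \<and> (\<exists>u\<in>B d. E v u))" for X Y
  have Bsub: "B d \<subseteq> V" if "d \<in> D" for d using that DV by (auto simp: B_def R_def)
  have notinB: "v \<notin> B d" if "v \<in> I" "d \<in> D" for v d
    using that ID(2) by (auto simp: B_def R_def)
  have singB: "{v} \<noteq> B d" if "v \<in> I" "d \<in> D" for v d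
    using notinB[OF that] by auto
  have Bdisj: "B d \<inter> B d' = {}" if "d \<in> D" "d' \<in> D" "d \<noteq> d'" for d d'
    using that by (auto simp: B_def R_def)
  have Binj: "inj_on B D"
    by (rule inj_onI) (metis Bdisj B_def disjoint_iff insertI1)
  have BnotA: "B d \<notin> (\<lambda>v. {v}) ` I" if "d \<in> D" for d
  proof
    assume "B d \<in> (\<lambda>v. {v}) ` I"
    then obtain v where "v \<in> I" "B d = {v}" by auto
    thus False using singB that by metis
  qed
  have graphH: "graph VH EH"
    unfolding graph_def
  proof (intro conjI allI impI)
    show "finite VH" using fI fD by (simp add: VH_def)
  next
    fix X Y assume "EH X Y"
    then obtain v d where v: "v \<in> I" "d \<in> D" and c: "(X = {v} \<and> Y = B d) \<or> (X = B d \<and> Y = {v})"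
      and e: "\<exists>u\<in>B d. E v u" unfolding EH_def by blast
    show "X \<in> VH" "Y \<in> VH" using v c by (auto simp: VH_def)
    show "X \<noteq> Y" using c singB[OF v] by metis
    show "EH Y X" unfolding EH_def using v c e by blast
  qed
  have h1: "X \<subseteq> V \<and> (\<exists>c\<in>X. \<forall>v\<in>X. v = c \<or> E c v)" if "X \<in> VH" for X
  proof -
    from that consider (s) v where "v \<in> I" "X = {v}" | (b) d where "d \<in> D" "X = B d"
      unfolding VH_def by blast
    thus ?thesis
    proof cases
      case s thus ?thesis using IV by auto
    next
      case b
      have "\<forall>v\<in>B d. v = d \<or> E d v" using f unfolding B_def by auto
      thus ?thesis using b Bsub unfolding B_def by auto
    qed
  qed
  have h2: "X \<inter> Y = {}" if XY: "X \<in> VH" "Y \<in> VH" "X \<noteq> Y" for X Y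
  proof -
    from XY(1) consider (s) v where "v \<in> I" "X = {v}" | (b) d where "d \<in> D" "X = B d"
      unfolding VH_def by blast
    moreover from XY(2) consider (s) v where "v \<in> I" "Y = {v}" | (b) d where "d \<in> D" "Y = B d"
      unfolding VH_def by blast
    ultimately show ?thesis using XY(3) Bdisj notinB
      by (smt (verit, ccfv_SIG) disjoint_iff singletonD)
  qed
  have h3: "\<exists>u\<in>X. \<exists>v\<in>Y. E u v" if "EH X Y" for X Y
  proof -
    from that obtain v d where v: "v \<in> I" "d \<in> D" and c: "(X = {v} \<and> Y = B d) \<or> (X = B d \<and> Y = {v})"
      and e: "\<exists>u\<in>B d. E v u" unfolding EH_def by blast
    then obtain u where "u \<in> B d" "E v u" by blast
    thus ?thesis using c Esym by auto
  qed
  have minor: "shallow1_minor V E VH EH"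
    unfolding shallow1_minor_def using graphH h1 h2 h3 by blast
  have bip: "bipartite VH EH"
    unfolding bipartite_def
  proof (intro exI[of _ "(\<lambda>v. {v}) ` I"] conjI ballI impI)
    show "(\<lambda>v. {v}) ` I \<subseteq> VH" by (auto simp: VH_def)
  next
    fix X Y assume "X \<in> VH" "Y \<in> VH" "EH X Y"
    then obtain v d where v: "v \<in> I" "d \<in> D" and c: "(X = {v} \<and> Y = B d) \<or> (X = B d \<and> Y = {v})"
      unfolding EH_def by blast
    show "(X \<in> (\<lambda>v. {v}) ` I) = (Y \<notin> (\<lambda>v. {v}) ` I)"
      using c v BnotA[OF v(2)] by auto
  qed
  have cardVH: "card VH = card I + card D"
  proof -
    have "card VH = card ((\<lambda>v. {v}) ` I) + card (B ` D)"
      unfolding VH_def using fI fD BnotA by (intro card_Un_disjoint) auto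
    also have "card ((\<lambda>v. {v}) ` I) = card I" by (rule card_image) (auto simp: inj_on_def)
    also have "card (B ` D) = card D" using Binj by (rule card_image)
    finally show ?thesis .
  qed
  define Av where "Av v = {d \<in> D. \<exists>u\<in>B d. E v u}" for v
  have Avbig: "int (card (Av v)) > 2 * nabla - 1" if v: "v \<in> I" for v
  proof -
    have vD: "v \<in> Dhat V E D nabla" using ID(1) v by auto
    have "Av v \<subseteq> D - {v}" using v ID(2) by (auto simp: Av_def)
    moreover have "nbhd V E v \<subseteq> cnbhd_set V E (Av v)"
    proof
      fix u assume u: "u \<in> nbhd V E v"
      hence uV: "u \<in> V" and Evu: "E v u" by (auto simp: nbhd_def)
      have "u \<notin> I" using indep v Evu by blast
      show "u \<in> cnbhd_set V E (Av v)"
      proof (cases "u \<in> D")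
        case True
        hence "u \<in> Av v" using Evu by (auto simp: Av_def B_def)
        thus ?thesis by (auto simp: cnbhd_set_def)
      next
        case False
        hence uR: "u \<in> R" using uV \<open>u \<notin> I\<close> by (auto simp: R_def)
        hence "u \<in> B (f u)" by (auto simp: B_def)
        hence "f u \<in> Av v" using f[OF uR] Evu by (auto simp: Av_def)
        moreover have "u \<in> nbhd V E (f u)" using f[OF uR] uV by (auto simp: nbhd_def)
        ultimately show ?thesis by (auto simp: cnbhd_set_def)
      qed
    qed
    ultimately show ?thesis using vD unfolding Dhat_def by blast
  qed
  let ?ES = "{{x, y} | x y. x \<in> VH \<and> y \<in> VH \<and> EH x y}"
  have finES: "finite ?ES"
  proof (rule finite_subset)
    show "?ES \<subseteq> Pow VH" by auto
    show "finite (Pow VH)" using graphH by (simp add: graph_def)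
  qed
  have sub: "(\<lambda>(v,d). {{v}, B d}) ` (SIGMA v:I. Av v) \<subseteq> ?ES"
  proof
    fix z assume "z \<in> (\<lambda>(v,d). {{v}, B d}) ` (SIGMA v:I. Av v)"
    then obtain v d where z: "z = {{v}, B d}" and v: "v \<in> I" and d: "d \<in> Av v" by auto
    have "EH {v} (B d)" using v d unfolding EH_def Av_def by blast
    moreover have "{v} \<in> VH" "B d \<in> VH" using v d by (auto simp: VH_def Av_def)
    ultimately show "z \<in> ?ES" using z by blast
  qed
  have inj: "inj_on (\<lambda>(v,d). {{v}, B d}) (SIGMA v:I. Av v)"
  proof (rule inj_onI, clarsimp)
    fix v d v' d' assume a: "v \<in> I" "d \<in> Av v" "v' \<in> I" "d' \<in> Av v'" "{{v}, B d} = {{v'}, B d'}"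
    have dD: "d \<in> D" "d' \<in> D" using a by (auto simp: Av_def)
    have "{v} \<noteq> B d'" using singB a(1) dD by blast
    hence "{v} = {v'} \<and> B d = B d'" using a(5) unfolding doubleton_eq_iff by blast
    hence "{v} = {v'}" "B d = B d'" by auto
    moreover have "d = d'" using inj_onD[OF Binj \<open>B d = B d'\<close> dD] .
    ultimately show "v = v' \<and> d = d'" by simp
  qed
  have "card ((\<lambda>(v,d). {{v}, B d}) ` (SIGMA v:I. Av v)) \<le> card ?ES"
    by (rule card_mono[OF finES sub])
  hence "card (SIGMA v:I. Av v) \<le> num_edges VH EH"
    unfolding num_edges_def card_image[OF inj] .
  moreover have "card (SIGMA v:I. Av v) = (\<Sum>v\<in>I. card (Av v))"
    using fI fD by (intro card_SigmaI) (auto simp: Av_def)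
  moreover have "(\<Sum>v\<in>I. int (card (Av v))) \<ge> (\<Sum>v\<in>I. 2 * nabla)"
    using Avbig by (intro sum_mono) force
  moreover have "int (\<Sum>v\<in>I. card (Av v)) = (\<Sum>v\<in>I. int (card (Av v)))"
    by (rule of_nat_sum)
  moreover have "(\<Sum>v\<in>I. 2 * nabla) = int (card I) * (2 * nabla)" by simp
  ultimately have ie: "int (card I) * (2 * nabla) \<le> int (num_edges VH EH)"
    by linarith
  have "real_of_int (int (card I) * (2 * nabla)) \<le> real_of_int (int (num_edges VH EH))"
    using ie by (simp only: of_int_le_iff)
  hence "real (num_edges VH EH) \<ge> real (card D) * (2 * real_of_int nabla)"
    using cardI by simp
  moreover have "real (card VH) = 2 * real (card D)" using cardVH cardI by simp
  ultimately have "real_of_int nabla \<le> real (num_edges VH EH) / real (card VH)"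
    using pos by (simp add: field_simps)
  also have "\<dots> \<le> nabla1B V E" using nabla_ge[OF g minor bip] .
  finally show ?thesis .
qed


theorem lemma3:
  fixes V :: "'a set" and E :: "'a \<Rightarrow> 'a \<Rightarrow> bool" and D :: "'a set" and nabla :: int
  assumes "graph V E"
    and "V \<noteq> {}"
    and "min_dominating V E D"
    and "real_of_int nabla > nabla1B V E"
  shows "real (card (Dhat V E D nabla - D)) < hall_ratio V E * real (card D)"
proof (rule ccontr)
  assume "\<not> ?thesis"
  hence ge: "hall_ratio V E * real (card D) \<le> real (card (Dhat V E D nabla - D))" by simp
  have g: "graph V E" by fact
  have fV: "finite V" using g by (simp add: graph_def)
  have dom: "dominating V E D" using assms(3) by (simp add: min_dominating_def)
  have DV: "D \<subseteq> V" using dom by (simp add: dominating_def)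
  have fD: "finite D" using DV fV finite_subset by blast
  have "D \<noteq> {}"
  proof
    assume "D = {}"
    hence "cnbhd_set V E D = {}" by (simp add: cnbhd_set_def)
    thus False using dom assms(2) by (simp add: dominating_def)
  qed
  hence pos: "card D \<ge> 1" using fD by (simp add: Suc_le_eq card_gt_0_iff)
  have "subgraph V E V E" using g by (simp add: subgraph_def)
  hence r1: "real (card V) / real (alpha V E) \<le> hall_ratio V E" by (rule hall_ge[OF g])
  have a1: "alpha V E \<ge> 1" using alpha_pos[OF g assms(2)] .
  have cV: "card V \<ge> 1" using fV assms(2) by (simp add: Suc_le_eq card_gt_0_iff)
  have "real (card V) / real (alpha V E) > 0" using a1 cV by simp
  hence rpos: "hall_ratio V E > 0" using r1 by linarith
  define X where "X = Dhat V E D nabla - D"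
  have XV: "X \<subseteq> V" by (auto simp: X_def Dhat_def)
  have "hall_ratio V E * real (card D) > 0" using rpos pos by simp
  hence "real (card X) > 0" using ge unfolding X_def by linarith
  hence "X \<noteq> {}" by auto
  define F where "F x y = (E x y \<and> x \<in> X \<and> y \<in> X)" for x y
  have gX: "graph X F" using g XV fV finite_subset unfolding F_def graph_def by blast
  have "subgraph V E X F" using gX XV by (auto simp: subgraph_def F_def)
  hence r2: "real (card X) / real (alpha X F) \<le> hall_ratio V E" by (rule hall_ge[OF g])
  have a2: "alpha X F \<ge> 1" using alpha_pos[OF gX \<open>X \<noteq> {}\<close>] .
  hence "real (card X) \<le> hall_ratio V E * real (alpha X F)" using r2
    by (simp add: divide_le_eq)
  hence "hall_ratio V E * real (card D) \<le> hall_ratio V E * real (alpha X F)"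
    using ge unfolding X_def by linarith
  hence "card D \<le> alpha X F" using rpos by simp
  obtain J where J: "independent X F J" "card J = alpha X F"
    using alpha_props(2)[of X F] XV fV finite_subset by blast
  obtain I where I: "I \<subseteq> J" "card I = card D"
    using obtain_subset_with_card_n[of "card D" J] \<open>card D \<le> alpha X F\<close> J(2) by metis
  have IX: "I \<subseteq> X" using I J by (auto simp: independent_def)
  have "real_of_int nabla \<le> nabla1B V E"
  proof (rule minor_bound[OF g dom _ _ _ I(2) pos])
    show "I \<subseteq> Dhat V E D nabla" using IX by (auto simp: X_def)
    show "I \<inter> D = {}" using IX by (auto simp: X_def)
    show "\<forall>x\<in>I. \<forall>y\<in>I. \<not> E x y" using I J IX unfolding independent_def F_def by blast
  qed
  thus False using assms(4) by linarith
qed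

end
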